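(* Consider searching on a line with turn cost $t\ge0$ and lower bound $\lambda>0$ (defined in the context), and suppose $\frac{t}{2\lambda}\le1$. Let $s=\frac{t}{2\lambda}$. Then the periodic strategy with distances $$x_i=\Big(\big((1-s)\,i+(1+s)\big)2^i-s\Big)\lambda,\qquad i\ge1,$$ has competitive ratio $9$, and it is optimal (no search strategy has competitive ratio less than $9$).
   Context: Searching on a line with turn cost. Fix $\lambda>0$, $t\ge 0$. A search strategy is a sequence $\mathcal S(i)=(x_i,r_i)$, $i\ge1$, with $x_i>0$, $r_i\in\{\mathrm{left},\mathrm{right}\}$ and $\sup\{x_i:r_i=\mathrm{left}\}=\sup\{x_i:r_i=\mathrm{right}\}=\infty$. At step $i$ the searcher walks distance $x_i$ from the origin along ray $r_i$ and, if the target is not found, walks back to the origin, paying an additional turn cost $t$; thus each unsuccessful step costs $2x_i+t$. The target is on one of the two rays at unknown distance $D\ge\lambda$ and is found at the first step $j$ with $r_j$ equal to its ray and $x_j\ge D$; the total cost is then $\sum_{i=1}^{j-1}(2x_i+t)+D$. The competitive ratio of $\mathcal S$ is the supremum over all target positions of total cost divided by $D$; a strategy is optimal if its competitive ratio is minimal among all search strategies. A periodic strategy with distances $x_i$ means $r_1\ne r_2$ and $r_{i+2}=r_i$ (the rays alternate). For a periodic strategy with increasing distances the competitive ratio equals $\max\Big\{\frac{2x_1+t+\lambda}{\lambda},\ \sup_{n\ge1}\frac{\sum_{i=1}^{n+1}(2x_i+t)+x_n}{x_n}\Big\}$. *)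

theory Defs
  imports Complex_Main "HOL-Library.Extended_Real"
begin

text \<open>Rays are encoded as booleans (True = right, False = left).
A strategy is a pair of sequences x, r indexed from 1 (index 0 is ignored).\<close>

definition is_strategy :: "(nat \<Rightarrow> real) \<Rightarrow> (nat \<Rightarrow> bool) \<Rightarrow> bool" where
  "is_strategy x r \<longleftrightarrow> (\<forall>i\<ge>1. x i > 0) \<and> (\<forall>\<rho> B. \<exists>i\<ge>1. r i = \<rho> \<and> B < x i)"

definition find_step :: "(nat \<Rightarrow> real) \<Rightarrow> (nat \<Rightarrow> bool) \<Rightarrow> bool \<Rightarrow> real \<Rightarrow> nat" where
  "find_step x r \<rho> D = (LEAST j. 1 \<le> j \<and> r j = \<rho> \<and> D \<le> x j)"

definition search_cost :: "real \<Rightarrow> (nat \<Rightarrow> real) \<Rightarrow> (nat \<Rightarrow> bool) \<Rightarrow> bool \<Rightarrow> real \<Rightarrow> real" where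
  "search_cost t x r \<rho> D = (\<Sum>i = 1..<find_step x r \<rho> D. 2 * x i + t) + D"

definition comp_ratio :: "real \<Rightarrow> real \<Rightarrow> (nat \<Rightarrow> real) \<Rightarrow> (nat \<Rightarrow> bool) \<Rightarrow> ereal" where
  "comp_ratio lam t x r = (SUP p \<in> {(\<rho>, D). lam \<le> D}. ereal (search_cost t x r (fst p) (snd p) / snd p))"

definition periodic_rays :: "(nat \<Rightarrow> bool) \<Rightarrow> bool" where
  "periodic_rays r \<longleftrightarrow> r 1 \<noteq> r 2 \<and> (\<forall>i\<ge>1. r (i + 2) = r i)"

end

theory Submission
  imports Defs
begin


lemma periodic_r:
  assumes "periodic_rays r" "i \<ge> 1"
  shows "r i = (if odd i then r 1 else r 2)"
proof -
  have "\<forall>k. r (2*k+1) = r 1 \<and> r (2*k+2) = r 2"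
  proof
    fix k show "r (2*k+1) = r 1 \<and> r (2*k+2) = r 2"
    proof (induction k)
      case 0 then show ?case by (simp add: numeral_2_eq_2)
    next
      case (Suc k)
      have a: "r (2*k+1+2) = r (2*k+1)" using assms(1) unfolding periodic_rays_def by simp
      have b: "r (2*k+2+2) = r (2*k+2)" using assms(1) unfolding periodic_rays_def by simp
      have "2 * Suc k + 1 = 2*k+1+2" "2 * Suc k + 2 = 2*k+2+2" by simp_all
      then show ?case using a b Suc by simp
    qed
  qed
  moreover have "odd i \<Longrightarrow> \<exists>k. i = 2*k+1" by (metis oddE)
  moreover have "even i \<Longrightarrow> \<exists>k. i = 2*k+2"
  proof -
    assume "even i" then obtain m where m: "i = 2*m" by (rule evenE)
    with assms(2) have "m \<ge> 1" by simp
    with m have "i = 2*(m-1)+2" by simp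
    then show ?thesis by blast
  qed
  ultimately show ?thesis by auto
qed

lemma find_step_props:
  assumes "\<exists>j\<ge>1. r j = \<rho> \<and> D \<le> x j"
  shows "1 \<le> find_step x r \<rho> D" "r (find_step x r \<rho> D) = \<rho>" "D \<le> x (find_step x r \<rho> D)"
    "\<And>k. k < find_step x r \<rho> D \<Longrightarrow> 1 \<le> k \<Longrightarrow> r k = \<rho> \<Longrightarrow> x k < D"
proof -
  have L: "1 \<le> find_step x r \<rho> D \<and> r (find_step x r \<rho> D) = \<rho> \<and> D \<le> x (find_step x r \<rho> D)"
    unfolding find_step_def using assms by (rule LeastI_ex[where P="\<lambda>j. 1 \<le> j \<and> r j = \<rho> \<and> D \<le> x j"])
  then show "1 \<le> find_step x r \<rho> D" "r (find_step x r \<rho> D) = \<rho>" "D \<le> x (find_step x r \<rho> D)" by auto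
  fix k assume "k < find_step x r \<rho> D" "1 \<le> k" "r k = \<rho>"
  then show "x k < D" unfolding find_step_def using not_less_Least by fastforce
qed


lemma sum_identity:
  fixes x :: "nat \<Rightarrow> real"
  assumes t: "t = 2*s*lam" and xd: "\<And>i. x i = (((1 - s) * real i + (1 + s)) * 2 ^ i - s) * lam"
  shows "(\<Sum>i=1..<n+2. 2*x i + t) = 8 * x n"
proof (induction n)
  case 0
  have "{1..<(2::nat)} = {1}" by auto
  then show ?case by (simp add: xd t algebra_simps)
next
  case (Suc n)
  have "(\<Sum>i=1..<Suc n+2. 2*x i + t) = (\<Sum>i=1..<n+2. 2*x i + t) + (2 * x (n+2) + t)"
    by (simp add: sum.atLeastLessThan_Suc)
  also have "\<dots> = 8 * x n + (2 * x (n+2) + t)" using Suc by simp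
  also have "\<dots> = 8 * x (Suc n)"
    by (simp add: xd t algebra_simps power_Suc)
  finally show ?case .
qed

lemma upper_part:
  fixes lam t s :: real and x :: "nat \<Rightarrow> real"
  assumes lam: "lam > 0" and "t \<ge> 0" and s1: "t / (2 * lam) \<le> 1"
    and sd: "s = t / (2 * lam)"
    and xd: "\<And>i. x i = (((1 - s) * real i + (1 + s)) * 2 ^ i - s) * lam"
    and per: "periodic_rays r"
  shows "is_strategy x r \<and> comp_ratio lam t x r = 9"
proof -
  have s0: "s \<ge> 0" "s \<le> 1" using sd assms(2) lam s1 by auto
  have t: "t = 2*s*lam" using sd lam by simp
  have r2: "r 2 = (\<not> r 1)" using per unfolding periodic_rays_def by auto
  have xlow: "x i \<ge> real i * lam" for i
  proof -
    have "Suc i \<le> 2^i" by (rule Suc_leI) (rule less_exp)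
    then have "real (Suc i) \<le> real (2^i)" by (simp only: of_nat_le_iff)
    then have "real i + 1 \<le> 2^i" by simp
    moreover have "((1 - s) * real i + (1 + s)) \<ge> 1" using s0 by (simp add: mult_nonneg_nonneg add_increasing)
    moreover have "(2::real)^i \<ge> 0" by simp
    ultimately have "((1 - s) * real i + (1 + s)) * 2 ^ i \<ge> 1 * 2^i"
      by (intro mult_right_mono) auto
    then have "((1 - s) * real i + (1 + s)) * 2 ^ i - s \<ge> real i" using \<open>real i + 1 \<le> 2^i\<close> s0 by linarith
    then show ?thesis unfolding xd using lam by (simp add: mult_right_mono)
  qed
  have xpos: "x i > 0" if "i \<ge> 1" for i
  proof -
    have "real i * lam > 0" using that lam by simp
    then show ?thesis using xlow[of i] by linarith
  qed
  have unb: "\<exists>i\<ge>1. r i = \<rho> \<and> B < x i" for \<rho> B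
  proof -
    obtain k :: nat where k: "B / lam < real k" using reals_Archimedean2 by blast
    then have Bk: "B < real k * lam" using lam by (simp add: field_simps)
    have o: "r (2*k+1) = r 1" using periodic_r[OF per, of "2*k+1"] by simp
    have e: "r (2*k+2) = r 2" using periodic_r[OF per, of "2*k+2"] by simp
    have "x (2*k+1) > B"
    proof -
      have "real k * lam \<le> real (2*k+1) * lam" using lam by (intro mult_right_mono) auto
      then show ?thesis using Bk xlow[of "2*k+1"] by linarith
    qed
    moreover have "x (2*k+2) > B"
    proof -
      have "real k * lam \<le> real (2*k+2) * lam" using lam by (intro mult_right_mono) auto
      then show ?thesis using Bk xlow[of "2*k+2"] by linarith
    qed
    ultimately show ?thesis
    proof (cases "\<rho> = r 1")
      case True
      then show ?thesis using o \<open>x (2*k+1) > B\<close> by (intro exI[of _ "2*k+1"]) simp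
    next
      case False
      then have "\<rho> = r 2" using r2 by auto
      then show ?thesis using e \<open>x (2*k+2) > B\<close> by (intro exI[of _ "2*k+2"]) simp
    qed
  qed
  have strat: "is_strategy x r" unfolding is_strategy_def using xpos unb by auto
  have x0: "x 0 = lam" using xd[of 0] by simp
  have bound: "search_cost t x r \<rho> D / D \<le> 9" if D: "lam \<le> D" for \<rho> D
  proof -
    have ex: "\<exists>j\<ge>1. r j = \<rho> \<and> D \<le> x j" using unb[of \<rho> D] by force
    note F = find_step_props[OF ex]
    define j where "j = find_step x r \<rho> D"
    have Dpos: "D > 0" using D lam by linarith
    show ?thesis
    proof (cases "j = 1")
      case True
      then have "search_cost t x r \<rho> D = D" unfolding search_cost_def j_def[symmetric] by simp
      then show ?thesis using Dpos by simp
    next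
      case False
      have "j = (j - 2) + 2" using F(1) False unfolding j_def[symmetric] by simp
      then obtain n where n: "j = n + 2" by blast
      have xn: "x n \<le> D"
      proof (cases "n = 0")
        case True then show ?thesis using x0 D by simp
      next
        case False
        have "r n = r (n+2)" using per False unfolding periodic_rays_def by simp
        then have "r n = \<rho>" using F(2) n unfolding j_def[symmetric] by simp
        then show ?thesis using F(4)[of n] False n unfolding j_def[symmetric] by fastforce
      qed
      have "search_cost t x r \<rho> D = 8 * x n + D"
        unfolding search_cost_def j_def[symmetric] n using sum_identity[OF t xd] by simp
      then show ?thesis using xn Dpos by (simp add: divide_simps)
    qed
  qed
  have attain: "search_cost t x r (r 2) lam / lam = 9"
  proof -
    have ex: "\<exists>j\<ge>1. r j = r 2 \<and> lam \<le> x j" using xlow[of 2] lam by (intro exI[of _ 2]) auto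
    have "find_step x r (r 2) lam = 2"
    proof -
      note F = find_step_props[OF ex]
      have "find_step x r (r 2) lam \<noteq> 1" using F(2) r2 by auto
      moreover have "\<not> 2 < find_step x r (r 2) lam" using F(4)[of 2] xlow[of 2] lam by auto
      ultimately show ?thesis using F(1) by linarith
    qed
    moreover have "{1..<(2::nat)} = {1}" by auto
    ultimately have "search_cost t x r (r 2) lam = 2 * x 1 + t + lam" unfolding search_cost_def by simp
    also have "\<dots> = 9 * lam" using xd[of 1] t by (simp add: algebra_simps)
    finally show ?thesis using lam by simp
  qed
  have "comp_ratio lam t x r = 9"
    unfolding comp_ratio_def
  proof (rule antisym)
    show "(SUP p\<in>{(\<rho>, D). lam \<le> D}. ereal (search_cost t x r (fst p) (snd p) / snd p)) \<le> 9"
      by (rule SUP_least) (auto intro: bound)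
    have "ereal (search_cost t x r (r 2) lam / lam) \<le> (SUP p\<in>{(\<rho>, D). lam \<le> D}. ereal (search_cost t x r (fst p) (snd p) / snd p))"
      by (rule SUP_upper2[of "(r 2, lam)"]) auto
    then show "9 \<le> (SUP p\<in>{(\<rho>, D). lam \<le> D}. ereal (search_cost t x r (fst p) (snd p) / snd p))"
      using attain by simp
  qed
  with strat show ?thesis by simp
qed



primrec Mr :: "(nat \<Rightarrow> real) \<Rightarrow> (nat \<Rightarrow> bool) \<Rightarrow> bool \<Rightarrow> nat \<Rightarrow> real" where
  "Mr x r \<rho> 0 = 0"
| "Mr x r \<rho> (Suc n) = (if r (Suc n) = \<rho> then max (Mr x r \<rho> n) (x (Suc n)) else Mr x r \<rho> n)"

definition mn :: "(nat \<Rightarrow> real) \<Rightarrow> (nat \<Rightarrow> bool) \<Rightarrow> nat \<Rightarrow> real" where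
  "mn x r n = min (Mr x r True n) (Mr x r False n)"
definition Mx :: "(nat \<Rightarrow> real) \<Rightarrow> (nat \<Rightarrow> bool) \<Rightarrow> nat \<Rightarrow> real" where
  "Mx x r n = max (Mr x r True n) (Mr x r False n)"

primrec Sr :: "(nat \<Rightarrow> real) \<Rightarrow> nat \<Rightarrow> real" where
  "Sr x 0 = 0" | "Sr x (Suc n) = Sr x n + x (Suc n)"

primrec Ur :: "(nat \<Rightarrow> real) \<Rightarrow> (nat \<Rightarrow> bool) \<Rightarrow> nat \<Rightarrow> real" where
  "Ur x r 0 = 0"
| "Ur x r (Suc n) = Ur x r n + (if mn x r n < mn x r (Suc n) then mn x r (Suc n) else 0)"

lemma Mr_nonneg: "Mr x r \<rho> n \<ge> 0"
  by (induction n) auto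

lemma Mr_mono_Suc: "Mr x r \<rho> n \<le> Mr x r \<rho> (Suc n)"
  by auto

lemma Mr_mono: "m \<le> n \<Longrightarrow> Mr x r \<rho> m \<le> Mr x r \<rho> n"
  by (induction n rule: dec_induct) (auto intro: order_trans[OF _ Mr_mono_Suc])

lemma Mr_ge: "1 \<le> k \<Longrightarrow> k \<le> n \<Longrightarrow> r k = \<rho> \<Longrightarrow> x k \<le> Mr x r \<rho> n"
proof -
  assume k: "1 \<le> k" "k \<le> n" "r k = \<rho>"
  obtain k' where k': "k = Suc k'" using k(1) by (cases k) auto
  have "x k \<le> Mr x r \<rho> k" using k k' by simp
  then show ?thesis using Mr_mono[OF k(2), of x r \<rho>] by linarith
qed

lemma mn_mono_Suc: "mn x r n \<le> mn x r (Suc n)"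
  unfolding mn_def using Mr_mono_Suc[of x r True n] Mr_mono_Suc[of x r False n] by linarith

lemma mn_mono: "m \<le> n \<Longrightarrow> mn x r m \<le> mn x r n"
  by (induction n rule: dec_induct) (auto intro: order_trans[OF _ mn_mono_Suc])

lemma mn_Suc_le_Mx: "mn x r (Suc n) \<le> Mx x r n"
  unfolding mn_def Mx_def by (cases "r (Suc n)") auto

lemma Sr_sum: "Sr x n = sum x {1..n}"
  by (induction n) (auto simp: sum.cl_ivl_Suc)

lemma mn_nonneg: "mn x r n \<ge> 0"
  unfolding mn_def using Mr_nonneg[of x r True n] Mr_nonneg[of x r False n] by simp

lemma Ur_nonneg: "Ur x r n \<ge> 0"
  by (induction n) (use mn_nonneg in auto)

lemma inv1:
  assumes pos: "\<And>i. i \<ge> 1 \<Longrightarrow> x i > 0"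
  shows "Sr x n - Mx x r n \<ge> Ur x r n"
proof (induction n)
  case 0 then show ?case by (simp add: Mx_def)
next
  case (Suc n)
  have xp: "x (Suc n) > 0" using pos by simp
  define A where "A = Mr x r (r (Suc n)) n"
  define B where "B = Mr x r (\<not> r (Suc n)) n"
  have A0: "A \<ge> 0" "B \<ge> 0" unfolding A_def B_def by (auto simp: Mr_nonneg)
  have key: "x (Suc n) - max (max A (x (Suc n))) B + max A B \<ge>
     (if min A B < min (max A (x (Suc n))) B then min (max A (x (Suc n))) B else 0)"
    using xp A0 by (auto simp: max_def min_def)
  have e1: "mn x r n = min A B" "Mx x r n = max A B"
    unfolding mn_def Mx_def A_def B_def by (cases "r (Suc n)"; auto simp: min.commute max.commute)+
  have e2: "mn x r (Suc n) = min (max A (x (Suc n))) B" "Mx x r (Suc n) = max (max A (x (Suc n))) B"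
    unfolding mn_def Mx_def A_def B_def by (cases "r (Suc n)"; auto simp: min.commute max.commute)+
  show ?case unfolding Sr.simps Ur.simps e1 e2 using Suc key e1 by linarith
qed

lemma Ur_ge_mn: "Ur x r n \<ge> mn x r n"
proof (induction n)
  case 0 then show ?case by (simp add: mn_def)
next
  case (Suc n)
  then show ?case using mn_mono_Suc[of x r n] Ur_nonneg[of x r n] by auto
qed


lemma arith_step:
  fixes a c Q0 d p u Q :: real
  assumes a: "0 < a" "a < 4" and c: "c = a*(4-a)/4" and Q0: "Q0 > 0" and d: "d = c / Q0"
    and p: "0 < p" "p < u" and uQ: "u \<le> Q*p" and QQ: "Q \<le> Q0"
  shows "a*(u-p) \<le> (Q-d)*u"
proof -
  have Q1: "Q > 1"
  proof (rule ccontr)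
    assume "\<not> Q > 1"
    then have "Q*p \<le> 1*p" using p by (intro mult_right_mono) auto
    then show False using uQ p by linarith
  qed
  have "a*(4-a) > 0" using a by simp
  then have c0: "c \<ge> 0" using c by simp
  have h1: "Q*Q - a*Q + a \<ge> c"
  proof -
    have "(Q - a/2)*(Q - a/2) \<ge> 0" by simp
    then show ?thesis using c by (simp add: algebra_simps)
  qed
  have h2: "d*Q \<le> c"
  proof -
    have "d*Q = c * (Q/Q0)" using d by simp
    also have "\<dots> \<le> c * 1" using QQ Q0 c0 by (intro mult_left_mono) auto
    finally show ?thesis by simp
  qed
  have h3: "d*Q \<le> Q*Q - a*Q + a" using h1 h2 by linarith
  have up: "u > 0" using p by linarith
  have h4: "(d*Q)*(u/Q) \<le> (Q*Q - a*Q + a)*(u/Q)" using h3 up Q1 by (intro mult_right_mono) auto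
  have e1: "(d*Q)*(u/Q) = d*u" using Q1 by simp
  have e2: "(Q*Q - a*Q + a)*(u/Q) = Q*u - a*u + a*(u/Q)" using Q1 by (simp add: field_simps)
  have h5: "u/Q \<le> p" using uQ Q1 by (simp add: divide_simps mult.commute)
  have h6: "a*(u/Q) \<le> a*p" using h5 a by (intro mult_left_mono) auto
  show ?thesis using h4 e1 e2 h6 by (simp add: algebra_simps)
qed

lemma cond:
  assumes strat: "is_strategy x r" and t: "t \<ge> 0" and lam: "lam > 0" and C: "C > 1"
    and bound: "\<And>\<rho> D. lam \<le> D \<Longrightarrow> search_cost t x r \<rho> D / D \<le> C"
  shows "2 * Sr x n \<le> (C - 1) * max (mn x r n) lam"
proof -
  obtain \<rho> where \<rho>: "Mr x r \<rho> n = mn x r n"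
    unfolding mn_def by (cases "Mr x r True n \<le> Mr x r False n") (auto simp: min_def)
  have pos: "\<And>i. i \<ge> 1 \<Longrightarrow> x i > 0" using strat unfolding is_strategy_def by auto
  have main: "2 * Sr x n \<le> (C - 1) * D" if D: "max (mn x r n) lam < D" for D
  proof -
    have Dl: "lam \<le> D" "D > 0" using D lam by auto
    have ex: "\<exists>j\<ge>1. r j = \<rho> \<and> D \<le> x j"
      using strat unfolding is_strategy_def by (meson less_imp_le)
    note F = find_step_props[OF ex]
    define j where "j = find_step x r \<rho> D"
    have jn: "n < j"
    proof (rule ccontr)
      assume "\<not> n < j"
      then have "x j \<le> Mr x r \<rho> n" using F(1,2) Mr_ge[of j n r \<rho> x] unfolding j_def by simp
      then show False using F(3) \<rho> D unfolding j_def by simp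
    qed
    have "2 * Sr x n = (\<Sum>i=1..n. 2 * x i)" by (simp add: Sr_sum sum_distrib_left)
    also have "\<dots> \<le> (\<Sum>i=1..<j. 2 * x i)"
      using jn by (intro sum_mono2) (auto intro!: less_imp_le[OF pos])
    also have "\<dots> \<le> (\<Sum>i=1..<j. 2 * x i + t)" using t by (intro sum_mono) auto
    finally have "2 * Sr x n + D \<le> search_cost t x r \<rho> D" unfolding search_cost_def j_def by simp
    also have "\<dots> \<le> C * D" using bound[OF Dl(1), of \<rho>] Dl(2) by (simp add: divide_simps)
    finally show ?thesis by (simp add: algebra_simps)
  qed
  show ?thesis
  proof (rule dense_ge)
    fix y assume y: "(C - 1) * max (mn x r n) lam < y"
    have "max (mn x r n) lam < y / (C - 1)" using y C by (simp add: pos_less_divide_eq mult.commute del: max_less_iff_conj)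
    from main[OF this] show "2 * Sr x n \<le> y" using C by simp
  qed
qed


lemma lower_false:
  fixes a lam :: real
  assumes strat: "is_strategy x r" and lam: "lam > 0" and a: "0 < a" "a < 4"
    and cnd: "\<And>n. Sr x n \<le> a * max (mn x r n) lam"
  shows False
proof -
  have pos: "\<And>i. i \<ge> 1 \<Longrightarrow> x i > 0" using strat unfolding is_strategy_def by auto
  have unb: "\<exists>n. mn x r n > B" for B
  proof -
    obtain i1 where i1: "i1 \<ge> 1" "r i1 = True" "B < x i1" using strat unfolding is_strategy_def by blast
    obtain i2 where i2: "i2 \<ge> 1" "r i2 = False" "B < x i2" using strat unfolding is_strategy_def by blast
    have "x i1 \<le> Mr x r True (max i1 i2)" using Mr_ge[of i1 "max i1 i2" r True x] i1 by simp
    moreover have "x i2 \<le> Mr x r False (max i1 i2)" using Mr_ge[of i2 "max i1 i2" r False x] i2 by simp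
    ultimately have "mn x r (max i1 i2) > B" unfolding mn_def using i1 i2 by simp
    then show ?thesis by blast
  qed
  define jump where "jump n \<longleftrightarrow> mn x r n < mn x r (Suc n)" for n
  have const: "Ur x r m = Ur x r n \<and> mn x r m = mn x r n"
    if "n \<le> m" "\<forall>j. n \<le> j \<longrightarrow> j < m \<longrightarrow> \<not> jump j" for n m
    using that
  proof (induction m rule: dec_induct)
    case base then show ?case by simp
  next
    case (step m)
    then have nj: "\<not> jump m" by simp
    then have "mn x r (Suc m) = mn x r m" using mn_mono_Suc[of x r m] unfolding jump_def by simp
    then show ?case using step nj unfolding jump_def by simp
  qed
  have exjump: "\<exists>m\<ge>n. jump m" for n
  proof (rule ccontr)
    assume "\<not> (\<exists>m\<ge>n. jump m)"
    then have "\<forall>j. n \<le> j \<longrightarrow> j < m \<longrightarrow> \<not> jump j" for m by auto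
    then have c: "m \<ge> n \<Longrightarrow> mn x r m = mn x r n" for m using const by blast
    obtain N where N: "mn x r N > mn x r n" using unb by blast
    show False
    proof (cases "N \<le> n")
      case True then show False using mn_mono[OF True, of x r] N by simp
    next
      case False then show False using c[of N] N by simp
    qed
  qed
  have nextjump: "\<exists>m\<ge>n. jump m \<and> Ur x r m = Ur x r n \<and> mn x r m = mn x r n" for n
  proof -
    define m where "m = (LEAST m. n \<le> m \<and> jump m)"
    have m1: "n \<le> m \<and> jump m" unfolding m_def using exjump[of n] by (rule LeastI_ex[where P="\<lambda>m. n \<le> m \<and> jump m"])
    have m2: "\<forall>j. n \<le> j \<longrightarrow> j < m \<longrightarrow> \<not> jump j" unfolding m_def using not_less_Least by blast
    show ?thesis using m1 const[OF _ m2] by blast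
  qed
  have jstep: "Ur x r (Suc m) \<le> a * mn x r m" if "jump m" "mn x r m \<ge> lam" for m
  proof -
    have "Ur x r (Suc m) = Ur x r m + mn x r (Suc m)" using that(1) unfolding jump_def by simp
    also have "\<dots> \<le> Ur x r m + Mx x r m" using mn_Suc_le_Mx[of x r m] by simp
    also have "\<dots> \<le> Sr x m" using inv1[of x r m] pos by simp
    also have "\<dots> \<le> a * mn x r m" using cnd[of m] that(2) by simp
    finally show ?thesis .
  qed
  obtain n1 where n1: "mn x r n1 > lam" using unb by blast
  obtain n2 where n2: "n2 \<ge> n1" "jump n2" using exjump by blast
  define u0 where "u0 = Ur x r (Suc n2)"
  define p0 where "p0 = Ur x r (Suc n2) - mn x r (Suc n2)"
  have p0e: "p0 = Ur x r n2" unfolding p0_def using n2(2) unfolding jump_def by simp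
  have mn2: "mn x r n2 > lam" using mn_mono[OF n2(1), of x r] n1 by simp
  have p0pos: "p0 > 0" using p0e Ur_ge_mn[of x r n2] mn2 lam by simp
  have u0p0: "u0 \<ge> p0" unfolding u0_def p0_def using mn_nonneg[of x r] by simp
  define Q0 where "Q0 = u0 / p0"
  have Q0pos: "Q0 > 0" unfolding Q0_def using p0pos u0p0 by simp
  define c where "c = a*(4-a)/4"
  define d where "d = c / Q0"
  have dpos: "d > 0" unfolding d_def c_def using a Q0pos by simp
  define good where "good n Q \<longleftrightarrow> n1 \<le> n \<and> 0 < Ur x r n - mn x r n \<and> Ur x r n \<le> Q * (Ur x r n - mn x r n)" for n Q
  have claim: "\<exists>n. good n (Q0 - real N * d)" for N
  proof (induction N)
    case 0
    have "u0 \<le> Q0 * p0" unfolding Q0_def using p0pos by simp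
    then have "good (Suc n2) Q0" unfolding good_def using n2(1) p0pos unfolding u0_def p0_def by simp
    then show ?case by auto
  next
    case (Suc N)
    then obtain n where g: "good n (Q0 - real N * d)" by blast
    define Q where "Q = Q0 - real N * d"
    obtain m where m: "m \<ge> n" "jump m" "Ur x r m = Ur x r n" "mn x r m = mn x r n" using nextjump by blast
    define u where "u = Ur x r n"
    define p where "p = Ur x r n - mn x r n"
    have gn: "n1 \<le> n" "0 < p" "u \<le> Q * p" using g unfolding good_def Q_def u_def p_def by auto
    have mnl: "mn x r n \<ge> lam" using mn_mono[OF gn(1), of x r] n1 by simp
    have pu: "p < u" unfolding p_def u_def using mnl lam by simp
    have QQ: "Q \<le> Q0" unfolding Q_def using dpos by simp
    have "Ur x r (Suc m) \<le> a * mn x r m" using jstep[of m] m mnl by simp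
    also have "\<dots> = a * (u - p)" unfolding u_def p_def using m by simp
    also have "\<dots> \<le> (Q - d) * u"
      by (rule arith_step[OF a c_def Q0pos d_def gn(2) pu gn(3) QQ])
    finally have A: "Ur x r (Suc m) \<le> (Q - d) * u" .
    have B: "Ur x r (Suc m) - mn x r (Suc m) = u" unfolding u_def using m(2,3) unfolding jump_def by simp
    have "good (Suc m) (Q0 - real (Suc N) * d)"
      unfolding good_def using B A gn m(1) pu
      by (simp add: Q_def algebra_simps)
    then show ?case by blast
  qed
  obtain N :: nat where N: "Q0 < real N * d" using ex_less_of_nat_mult[OF dpos] by blast
  obtain n where g: "good n (Q0 - real N * d)" using claim by blast
  then have "Ur x r n \<le> (Q0 - real N * d) * (Ur x r n - mn x r n)" "0 < Ur x r n - mn x r n"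
    unfolding good_def by auto
  moreover have "(Q0 - real N * d) * (Ur x r n - mn x r n) < 0"
    using N calculation(2) by (simp add: mult_neg_pos)
  ultimately show False using Ur_nonneg[of x r n] by linarith
qed


theorem lemma1:
  fixes lam t s :: real and x :: "nat \<Rightarrow> real"
  assumes "lam > 0" and "t \<ge> 0" and "t / (2 * lam) \<le> 1"
    and "s = t / (2 * lam)"
    and "\<And>i. x i = (((1 - s) * real i + (1 + s)) * 2 ^ i - s) * lam"
  shows "(\<forall>r. periodic_rays r \<longrightarrow> is_strategy x r \<and> comp_ratio lam t x r = 9) \<and>
         (\<forall>x' r'. is_strategy x' r' \<longrightarrow> 9 \<le> comp_ratio lam t x' r')"
proof (rule conjI)
  show "\<forall>r. periodic_rays r \<longrightarrow> is_strategy x r \<and> comp_ratio lam t x r = 9"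
    using upper_part[OF assms] by blast
next
  show "\<forall>x' r'. is_strategy x' r' \<longrightarrow> 9 \<le> comp_ratio lam t x' r'"
  proof (intro allI impI)
  fix x' r' assume strat: "is_strategy x' r'"
  show "9 \<le> comp_ratio lam t x' r'"
  proof (rule ccontr)
    assume "\<not> 9 \<le> comp_ratio lam t x' r'"
    then have "comp_ratio lam t x' r' < ereal 9" by simp
    then obtain C0 where C0: "comp_ratio lam t x' r' < ereal C0" "ereal C0 < ereal 9"
      using ereal_dense2 by blast
    define C where "C = max C0 8"
    have C: "C > 1" "C < 9" using C0(2) unfolding C_def by auto
    have bound: "search_cost t x' r' \<rho> D / D \<le> C" if "lam \<le> D" for \<rho> D
    proof -
      have "ereal (search_cost t x' r' \<rho> D / D) \<le> comp_ratio lam t x' r'"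
        unfolding comp_ratio_def by (rule SUP_upper2[of "(\<rho>, D)"]) (use that in auto)
      then have "ereal (search_cost t x' r' \<rho> D / D) < ereal C0" using C0(1) by (rule le_less_trans)
      then show ?thesis unfolding C_def by simp
    qed
    have cn: "Sr x' n \<le> ((C - 1)/2) * max (mn x' r' n) lam" for n
      using cond[OF strat assms(2) assms(1) C(1) bound, of n] by simp
    show False
      by (rule lower_false[OF strat assms(1) _ _ cn]) (use C in auto)
  qed
  qed
qed

end
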